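(* For every $n\ge 1$, $|\mathcal{ORCT}_n|=(n+1)2^{n-1}-n$.
   Context: $X_n=\{1,2,\dots,n\}$ with its usual order. A map $\alpha:X_n\to X_n$ is order-preserving if $x\le y$ implies $x\alpha\le y\alpha$, order-reversing if $x\le y$ implies $x\alpha\ge y\alpha$, and a contraction if $|x\alpha-y\alpha|\le|x-y|$ for all $x,y$. $\mathcal{ORCT}_n$ is the set of all maps $X_n\to X_n$ (defined on all of $X_n$) that are contractions and are either order-preserving or order-reversing. *)

theory Defs
  imports Main "HOL-Library.FuncSet"
begin

text \<open>Full transformations of X_n = {1..n} are represented as extensional
functions in PiE {1..n} (constant {1..n}) (value undefined outside X_n), so that
distinct maps correspond to distinct functions.\<close>

definition order_preserving_on :: "nat set \<Rightarrow> (nat \<Rightarrow> nat) \<Rightarrow> bool" where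
  "order_preserving_on X f \<longleftrightarrow> (\<forall>x\<in>X. \<forall>y\<in>X. x \<le> y \<longrightarrow> f x \<le> f y)"

definition order_reversing_on :: "nat set \<Rightarrow> (nat \<Rightarrow> nat) \<Rightarrow> bool" where
  "order_reversing_on X f \<longleftrightarrow> (\<forall>x\<in>X. \<forall>y\<in>X. x \<le> y \<longrightarrow> f x \<ge> f y)"

definition contraction_on :: "nat set \<Rightarrow> (nat \<Rightarrow> nat) \<Rightarrow> bool" where
  "contraction_on X f \<longleftrightarrow>
     (\<forall>x\<in>X. \<forall>y\<in>X. \<bar>int (f x) - int (f y)\<bar> \<le> \<bar>int x - int y\<bar>)"

definition ORCT :: "nat \<Rightarrow> (nat \<Rightarrow> nat) set" where
  "ORCT n = {f \<in> {1..n} \<rightarrow>\<^sub>E {1..n}.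
     contraction_on {1..n} f \<and>
     (order_preserving_on {1..n} f \<or> order_reversing_on {1..n} f)}"

end

theory Submission
  imports Defs
begin

definition OP :: "nat \<Rightarrow> (nat \<Rightarrow> nat) set" where
  "OP n = {f \<in> {1..n} \<rightarrow>\<^sub>E {1..n}. contraction_on {1..n} f \<and> order_preserving_on {1..n} f}"

definition ORv :: "nat \<Rightarrow> (nat \<Rightarrow> nat) set" where
  "ORv n = {f \<in> {1..n} \<rightarrow>\<^sub>E {1..n}. contraction_on {1..n} f \<and> order_reversing_on {1..n} f}"

definition gfun :: "nat \<Rightarrow> nat \<Rightarrow> nat set \<Rightarrow> nat \<Rightarrow> nat" where
  "gfun n a S = (\<lambda>i. if i \<in> {1..n} then a + card {j\<in>S. j < i} else undefined)"

lemma fin_lt[simp]: "finite {j\<in>S. j<(y::nat)}"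
  by (rule finite_subset[of _ "{..<y}"]) auto

lemma card_step: "card {j\<in>S. j < Suc i} = card {j\<in>S. j<i} + (if i\<in>S then 1 else 0)"
proof -
  have "{j\<in>S. j < Suc i} = (if i\<in>S then insert i {j\<in>S. j<i} else {j\<in>S. j<i})"
    by (auto simp: less_Suc_eq)
  moreover have "finite {j\<in>S. j<i}" by simp
  ultimately show ?thesis by simp
qed

lemma card_le_diff: "x \<le> y \<Longrightarrow> card {j\<in>S. j<y} \<le> card {j\<in>S. j<x} + (y - x)"
proof (induction y rule: dec_induct)
  case base then show ?case by simp
next
  case (step y) then show ?case using card_step[of S y] by (auto split: if_splits)
qed

lemma card_mono_lt: "(x::nat) \<le> y \<Longrightarrow> card {j\<in>S. j<x} \<le> card {j\<in>S. j<y}"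
  by (rule card_mono) auto

lemma gfun_in_OP:
  assumes "S \<subseteq> {1..<n}" "1 \<le> a" "a + card S \<le> n"
  shows "gfun n a S \<in> OP n"
proof -
  have cS: "card {j\<in>S. j<i} \<le> card S" for i
    using assms(1) by (intro card_mono) (auto intro: finite_subset)
  have pie: "gfun n a S \<in> {1..n} \<rightarrow>\<^sub>E {1..n}"
  proof (rule PiE_I)
    fix x assume "x \<in> {1..n}"
    then show "gfun n a S x \<in> {1..n}" using cS[of x] assms by (simp add: gfun_def)
  next
    fix x assume "x \<notin> {1..n}"
    then show "gfun n a S x = undefined" unfolding gfun_def by auto
  qed
  have op: "order_preserving_on {1..n} (gfun n a S)"
    unfolding order_preserving_on_def gfun_def using card_mono_lt by auto
  have c1: "\<bar>int (a + card {j\<in>S. j<x}) - int (a + card {j\<in>S. j<y})\<bar> \<le> \<bar>int x - int y\<bar>"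
    if "x \<le> y" for x y
    using card_le_diff[OF that, of S] card_mono_lt[OF that, of S] that by linarith
  have ct: "contraction_on {1..n} (gfun n a S)"
    unfolding contraction_on_def gfun_def
  proof (intro ballI)
    fix x y assume "x \<in> {1..n}" "y \<in> {1..n}"
    show "\<bar>int (if x \<in> {1..n} then a + card {j \<in> S. j < x} else undefined) -
          int (if y \<in> {1..n} then a + card {j \<in> S. j < y} else undefined)\<bar> \<le> \<bar>int x - int y\<bar>"
      using \<open>x \<in> {1..n}\<close> \<open>y \<in> {1..n}\<close> c1[of x y] c1[of y x] by (cases "x \<le> y") (auto simp: abs_minus_commute)
  qed
  show ?thesis using pie op ct by (simp add: OP_def)
qed

lemma OP_form:
  assumes f: "f \<in> OP n" and n1: "1 \<le> n"
  defines "S \<equiv> {j\<in>{1..<n}. f (Suc j) \<noteq> f j}"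
  shows "f = gfun n (f 1) S \<and> S \<subseteq> {1..<n} \<and> 1 \<le> f 1 \<and> f 1 + card S \<le> n"
proof -
  have pie: "f \<in> {1..n} \<rightarrow>\<^sub>E {1..n}" and ct: "contraction_on {1..n} f"
    and op: "order_preserving_on {1..n} f" using f by (auto simp: OP_def)
  have key: "i \<le> n \<Longrightarrow> f i = f 1 + card {j\<in>S. j<i}" if "1 \<le> i" for i
    using that
  proof (induction i rule: dec_induct)
    case base
    have "{j\<in>S. j<1} = {}" by (auto simp: S_def)
    then show ?case by simp
  next
    case (step i)
    have i1: "i \<in> {1..n}" "Suc i \<in> {1..n}" using step by auto
    have m: "f i \<le> f (Suc i)" using op i1 by (auto simp: order_preserving_on_def)
    have "\<bar>int (f (Suc i)) - int (f i)\<bar> \<le> \<bar>int (Suc i) - int i\<bar>"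
      using ct i1 unfolding contraction_on_def by blast
    then have d: "f (Suc i) \<le> f i + 1" by simp
    have iS: "i \<in> S \<longleftrightarrow> f (Suc i) \<noteq> f i" using step by (auto simp: S_def)
    show ?case using step.IH step.prems m d iS card_step[of S i] by (auto split: if_splits)
  qed
  have Ssub: "S \<subseteq> {1..<n}" by (auto simp: S_def)
  have eq: "f = gfun n (f 1) S"
  proof
    fix i show "f i = gfun n (f 1) S i"
      using key[of i] pie by (cases "i \<in> {1..n}") (auto simp: gfun_def PiE_def extensional_def)
  qed
  have "{j\<in>S. j<n} = S" by (auto simp: S_def)
  then have "f n = f 1 + card S" using key[of n] n1 by simp
  moreover have "f n \<le> n" "1 \<le> f 1" using pie n1 by (auto simp: PiE_def Pi_def)
  ultimately show ?thesis using eq Ssub by simp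
qed


lemma gfun_inj:
  assumes "S \<subseteq> {1..<n}" "S' \<subseteq> {1..<n}" "gfun n a S = gfun n a' S'" "1 \<le> n"
  shows "S = S' \<and> a = a'"
proof -
  have e: "a + card {j\<in>S. j<i} = a' + card {j\<in>S'. j<i}" if "i \<in> {1..n}" for i
    using fun_cong[OF assms(3), of i] that by (simp add: gfun_def)
  have z: "{j\<in>S. j<1} = {}" "{j\<in>S'. j<1} = {}" using assms(1,2) by auto
  have e1: "a + card {j\<in>S. j<1} = a' + card {j\<in>S'. j<1}" using e[of 1] assms(4) by simp
  have aa: "a = a'" using e1 unfolding z by simp
  have "i \<in> S \<longleftrightarrow> i \<in> S'" for i
  proof (cases "i \<in> {1..<n}")
    case True
    then have "a + card {j\<in>S. j<Suc i} = a' + card {j\<in>S'. j<Suc i}"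
      "a + card {j\<in>S. j<i} = a' + card {j\<in>S'. j<i}" using e by auto
    then show ?thesis using card_step[of S i] card_step[of S' i] aa by (auto split: if_splits)
  next
    case False then show ?thesis using assms(1,2) by auto
  qed
  then show ?thesis using aa by auto
qed

definition Pset :: "nat \<Rightarrow> (nat set \<times> nat) set" where
  "Pset n = Sigma (Pow {1..<n}) (\<lambda>S. {1..n - card S})"

lemma card_Sub: "S \<subseteq> {1..<n} \<Longrightarrow> card S \<le> n - 1"
  using card_mono[of "{1..<n}" S] by simp

lemma OP_image:
  assumes "1 \<le> n"
  shows "OP n = (\<lambda>(S,a). gfun n a S) ` Pset n" and "inj_on (\<lambda>(S,a). gfun n a S) (Pset n)"
proof -
  show "OP n = (\<lambda>(S,a). gfun n a S) ` Pset n"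
  proof
    show "OP n \<subseteq> (\<lambda>(S,a). gfun n a S) ` Pset n"
    proof
      fix f assume f: "f \<in> OP n"
      define S where "S = {j\<in>{1..<n}. f (Suc j) \<noteq> f j}"
      have h: "f = gfun n (f 1) S \<and> S \<subseteq> {1..<n} \<and> 1 \<le> f 1 \<and> f 1 + card S \<le> n"
        using OP_form[OF f assms] unfolding S_def by simp
      then have "f 1 \<le> n - card S" by linarith
      then have "(S, f 1) \<in> Pset n" using h unfolding Pset_def by simp
      then show "f \<in> (\<lambda>(S,a). gfun n a S) ` Pset n"
        by (rule rev_image_eqI) (use h in simp)
    qed
  next
    show "(\<lambda>(S,a). gfun n a S) ` Pset n \<subseteq> OP n"
    proof (rule image_subsetI)
      fix p assume "p \<in> Pset n"
      then obtain S a where p: "p = (S,a)" "S \<subseteq> {1..<n}" "1 \<le> a" "a \<le> n - card S"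
        by (cases p) (simp add: Pset_def)
      have "card S \<le> n - 1" using card_Sub[OF p(2)] .
      then have "a + card S \<le> n" using p(4) by simp
      then show "(\<lambda>(S,a). gfun n a S) p \<in> OP n" using gfun_in_OP[OF p(2,3)] p(1) by simp
    qed
  qed
  show "inj_on (\<lambda>(S,a). gfun n a S) (Pset n)"
  proof (rule inj_onI)
    fix p q assume pq: "p \<in> Pset n" "q \<in> Pset n" "(\<lambda>(S,a). gfun n a S) p = (\<lambda>(S,a). gfun n a S) q"
    obtain S a S' a' where "p = (S,a)" "q = (S',a')" by (cases p, cases q)
    then show "p = q" using pq gfun_inj[of S n S' a a'] assms by (simp add: Pset_def)
  qed
qed

lemma card_Pset: "card (Pset n) = (\<Sum>S\<in>Pow {1..<n}. n - card S)"
  unfolding Pset_def by (subst card_SigmaI) auto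

lemma sum_double:
  assumes "1 \<le> n"
  shows "2 * (\<Sum>S\<in>Pow {1..<n}. n - card S) = (n + 1) * 2 ^ (n - 1)"
proof -
  let ?A = "{1..<n}"
  have b: "bij_betw (\<lambda>S. ?A - S) (Pow ?A) (Pow ?A)"
    by (rule bij_betwI[where g="\<lambda>S. ?A - S"]) auto
  have "(\<Sum>S\<in>Pow ?A. n - card S) = (\<Sum>S\<in>Pow ?A. n - card (?A - S))"
    using sum.reindex_bij_betw[OF b, of "\<lambda>S. n - card S"] by simp
  also have "\<dots> = (\<Sum>S\<in>Pow ?A. 1 + card S)"
  proof (rule sum.cong)
    fix S assume "S \<in> Pow ?A"
    then have "card (?A - S) = (n - 1) - card S" "card S \<le> n - 1"
      using card_Diff_subset[of S ?A] card_Sub[of S n] by (auto intro: finite_subset)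
    then show "n - card (?A - S) = 1 + card S" using assms by simp
  qed simp
  finally have eq1: "(\<Sum>S\<in>Pow ?A. n - card S) = (\<Sum>S\<in>Pow ?A. 1 + card S)" .
  have "2 * (\<Sum>S\<in>Pow ?A. n - card S) = (\<Sum>S\<in>Pow ?A. n - card S) + (\<Sum>S\<in>Pow ?A. 1 + card S)"
    using eq1 by (simp only: mult_2)
  also have "\<dots> = (\<Sum>S\<in>Pow ?A. (n - card S) + (1 + card S))"
    by (simp only: sum.distrib)
  also have "\<dots> = (\<Sum>S\<in>Pow ?A. n + 1)"
  proof (rule sum.cong)
    fix S assume "S \<in> Pow ?A"
    then have "card S \<le> n - 1" using card_Sub[of S n] by simp
    then show "n - card S + (1 + card S) = n + 1" using assms by simp
  qed simp
  also have "\<dots> = (n+1) * 2 ^ (n - 1)" by (simp add: card_Pow)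
  finally show ?thesis .
qed

definition rv :: "nat \<Rightarrow> (nat \<Rightarrow> nat) \<Rightarrow> nat \<Rightarrow> nat" where
  "rv n f = (\<lambda>i. if i \<in> {1..n} then n + 1 - f i else undefined)"

lemma rv_PiE: "f \<in> {1..n} \<rightarrow>\<^sub>E {1..n} \<Longrightarrow> rv n f \<in> {1..n} \<rightarrow>\<^sub>E {1..n}"
  by (auto simp: rv_def PiE_def Pi_def extensional_def)

lemma rv_rv: "f \<in> {1..n} \<rightarrow>\<^sub>E {1..n} \<Longrightarrow> rv n (rv n f) = f"
  by (rule ext) (auto simp: rv_def PiE_def Pi_def extensional_def)

lemma rv_contr: "f \<in> {1..n} \<rightarrow>\<^sub>E {1..n} \<Longrightarrow> contraction_on {1..n} f \<Longrightarrow> contraction_on {1..n} (rv n f)"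
  unfolding contraction_on_def rv_def
proof (intro ballI)
  fix x y assume f: "f \<in> {1..n} \<rightarrow>\<^sub>E {1..n}" and c: "\<forall>x\<in>{1..n}. \<forall>y\<in>{1..n}. \<bar>int (f x) - int (f y)\<bar> \<le> \<bar>int x - int y\<bar>"
    and xy: "x \<in> {1..n}" "y \<in> {1..n}"
  have "f x \<le> n" "f y \<le> n" using f xy by auto
  then show "\<bar>int (if x \<in> {1..n} then n + 1 - f x else undefined) - int (if y \<in> {1..n} then n + 1 - f y else undefined)\<bar> \<le> \<bar>int x - int y\<bar>"
  proof -
    have "\<bar>int (f x) - int (f y)\<bar> \<le> \<bar>int x - int y\<bar>" using c xy by blast
    moreover have "int (n + 1 - f x) = int n + 1 - int (f x)" "int (n + 1 - f y) = int n + 1 - int (f y)"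
      using \<open>f x \<le> n\<close> \<open>f y \<le> n\<close> by auto
    ultimately show ?thesis using xy by simp
  qed
qed

lemma rv_op: "f \<in> {1..n} \<rightarrow>\<^sub>E {1..n} \<Longrightarrow> order_preserving_on {1..n} f \<Longrightarrow> order_reversing_on {1..n} (rv n f)"
  unfolding order_reversing_on_def
proof (intro ballI impI)
  fix x y assume f: "f \<in> {1..n} \<rightarrow>\<^sub>E {1..n}" and o: "order_preserving_on {1..n} f"
    and xy: "x \<in> {1..n}" "y \<in> {1..n}" "x \<le> y"
  have "f x \<le> f y" using o xy unfolding order_preserving_on_def by blast
  then show "rv n f y \<le> rv n f x" using xy by (simp add: rv_def)
qed

lemma rv_or: "f \<in> {1..n} \<rightarrow>\<^sub>E {1..n} \<Longrightarrow> order_reversing_on {1..n} f \<Longrightarrow> order_preserving_on {1..n} (rv n f)"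
  unfolding order_preserving_on_def
proof (intro ballI impI)
  fix x y assume f: "f \<in> {1..n} \<rightarrow>\<^sub>E {1..n}" and o: "order_reversing_on {1..n} f"
    and xy: "x \<in> {1..n}" "y \<in> {1..n}" "x \<le> y"
  have "f y \<le> f x" using o xy unfolding order_reversing_on_def by blast
  moreover have "f x \<le> n" "f y \<le> n" using f xy by auto
  ultimately show "rv n f x \<le> rv n f y" using xy by (simp add: rv_def)
qed

lemma card_ORv: "card (ORv n) = card (OP n)"
proof -
  have "ORv n = rv n ` OP n"
  proof
    show "rv n ` OP n \<subseteq> ORv n" using rv_PiE rv_contr rv_op by (auto simp: OP_def ORv_def)
    show "ORv n \<subseteq> rv n ` OP n"
    proof
      fix f assume f: "f \<in> ORv n"
      then have "rv n f \<in> OP n" using rv_PiE rv_contr rv_or by (auto simp: OP_def ORv_def)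
      moreover have "f = rv n (rv n f)" using f rv_rv by (auto simp: ORv_def)
      ultimately show "f \<in> rv n ` OP n" by blast
    qed
  qed
  moreover have "inj_on (rv n) (OP n)"
    by (rule inj_on_inverseI[where g="rv n"]) (auto simp: OP_def rv_rv)
  ultimately show ?thesis by (simp add: card_image)
qed

lemma inter_const:
  assumes n1: "1 \<le> n"
  shows "OP n \<inter> ORv n = (\<lambda>c i. if i \<in> {1..n} then c else undefined) ` {1..n}"
proof
  show "OP n \<inter> ORv n \<subseteq> (\<lambda>c i. if i \<in> {1..n} then c else undefined) ` {1..n}"
  proof
    fix f assume f: "f \<in> OP n \<inter> ORv n"
    then have pie: "f \<in> {1..n} \<rightarrow>\<^sub>E {1..n}" and op: "order_preserving_on {1..n} f"
      and or: "order_reversing_on {1..n} f" unfolding OP_def ORv_def by blast+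
    show "f \<in> (\<lambda>c i. if i \<in> {1..n} then c else undefined) ` {1..n}"
    proof (cases "n = 0")
      case True
      then show ?thesis using n1 by simp
    next
      case False
      have all: "\<forall>i\<in>{1..n}. f i = f 1"
      proof
        fix i assume i: "i \<in> {1..n}"
        have one: "1 \<in> {1..n}" using n1 by simp
        have "f 1 \<le> f i" using op[unfolded order_preserving_on_def, rule_format, OF one i] i by simp
        moreover have "f i \<le> f 1" using or[unfolded order_reversing_on_def, rule_format, OF one i] i by simp
        ultimately show "f i = f 1" by simp
      qed
      have "f = (\<lambda>i. if i \<in> {1..n} then f 1 else undefined)"
      proof (rule ext)
        fix i show "f i = (if i \<in> {1..n} then f 1 else undefined)"
        proof (cases "i \<in> {1..n}")
          case True
          then have "f i = f 1" using all by blast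
          then show ?thesis using True by simp
        next
          case False then show ?thesis by (simp only: False if_False PiE_arb[OF pie False])
        qed
      qed
      moreover have "f 1 \<in> {1..n}" using pie n1 by (simp add: PiE_iff)
      ultimately show ?thesis by (intro rev_image_eqI[of "f 1"]) simp_all
    qed
  qed
  show "(\<lambda>c i. if i \<in> {1..n} then c else undefined) ` {1..n} \<subseteq> OP n \<inter> ORv n"
  proof (rule image_subsetI)
    fix c assume c: "c \<in> {1..n}"
    let ?g = "\<lambda>i. if i \<in> {1..n} then c else undefined"
    have "?g \<in> {1..n} \<rightarrow>\<^sub>E {1..n}"
    proof (rule PiE_I)
      fix x assume "x \<in> {1..n}" then show "?g x \<in> {1..n}" using c by simp
    next
      fix x assume "x \<notin> {1..n}" then show "?g x = undefined" by (simp only: if_False)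
    qed
    moreover have "contraction_on {1..n} ?g" unfolding contraction_on_def by simp
    moreover have "order_preserving_on {1..n} ?g" unfolding order_preserving_on_def by simp
    moreover have "order_reversing_on {1..n} ?g" unfolding order_reversing_on_def by simp
    ultimately show "?g \<in> OP n \<inter> ORv n" unfolding OP_def ORv_def by blast
  qed
qed

lemma card_inter: "1 \<le> n \<Longrightarrow> card (OP n \<inter> ORv n) = n"
proof -
  assume n: "1 \<le> n"
  have "inj_on (\<lambda>c i. if i \<in> {1..n} then c else undefined) {1..n}"
  proof (rule inj_onI)
    fix c d assume "(\<lambda>i. if i \<in> {1..n} then c else undefined) = (\<lambda>i. if i \<in> {1..n} then d else undefined)"
    from fun_cong[OF this, of 1] n show "c = d" by simp
  qed
  then have "card ((\<lambda>c i. if i \<in> {1..n} then c else undefined) ` {1..n}) = card {1..n}"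
    by (rule card_image)
  then show ?thesis unfolding inter_const[OF n] by simp
qed

theorem corollary3p6:
  fixes n :: nat
  assumes "n \<ge> 1"
  shows "card (ORCT n) = (n + 1) * 2 ^ (n - 1) - n"
proof -
  have u: "ORCT n = OP n \<union> ORv n" by (auto simp: ORCT_def OP_def ORv_def)
  have fin: "finite (OP n)" "finite (ORv n)"
    by (rule finite_subset[OF _ finite_PiE[of "{1..n}" "\<lambda>_. {1..n}"]], auto simp: OP_def ORv_def)+
  have "card (OP n) = card (Pset n)"
    using OP_image[OF assms] card_image by metis
  then have cOP: "2 * card (OP n) = (n + 1) * 2 ^ (n - 1)"
    using card_Pset sum_double[OF assms] by simp
  have "card (OP n \<union> ORv n) + card (OP n \<inter> ORv n) = card (OP n) + card (ORv n)"
    using card_Un_Int[OF fin] by simp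
  then have "card (ORCT n) + n = 2 * card (OP n)" using u card_ORv[of n] card_inter[OF assms] by simp
  then show ?thesis using cOP by linarith
qed

end
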